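(* Let $0<l<m<n$ be pairwise coprime square-free integers and let $K=\mathbb{Q}(\sqrt{ml},\sqrt{nl})$. Then \[ \tfrac{1}{48}\, n \le M(\mathcal{O}_K). \]
   Context: For a nonconstant polynomial $f(x)=c\prod_{i=1}^d (x-\alpha_i)\in\mathbb{C}[x]$, the Mahler measure is $M(f)=|c|\prod_{|\alpha_i|\ge 1}|\alpha_i|$. For an algebraic number $\alpha$, $M(\alpha)$ is the Mahler measure of its minimal polynomial over $\mathbb{Z}$ (with content $1$). For a number field $K$ with ring of integers $\mathcal{O}_K$, $M(\mathcal{O}_K)=\min\{M(\alpha):\alpha\in\mathcal{O}_K,\ \mathbb{Q}(\alpha)=K\}$. *)

theory Defs
  imports "HOL-Computational_Algebra.Computational_Algebra"
begin

definition mahler_measure :: "complex poly \<Rightarrow> real" where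
  "mahler_measure f =
     cmod (lead_coeff f) *
     (\<Prod>z\<in>{z. poly f z = 0 \<and> cmod z \<ge> 1}. cmod z ^ order z f)"

text \<open>Minimal polynomial of an algebraic number over the integers, normalised to
  content 1 and positive leading coefficient: the unique irreducible element of
  Z[x] with positive leading coefficient having alpha as a root.\<close>
definition min_int_poly :: "complex \<Rightarrow> int poly" where
  "min_int_poly \<alpha> =
     (THE p. irreducible p \<and> lead_coeff p > 0 \<and> poly (map_poly of_int p) \<alpha> = 0)"

definition mahler_alg :: "complex \<Rightarrow> real" where
  "mahler_alg \<alpha> = mahler_measure (map_poly of_int (min_int_poly \<alpha>))"

definition is_subfield :: "complex set \<Rightarrow> bool" where
  "is_subfield F \<longleftrightarrow> 0 \<in> F \<and> 1 \<in> F \<and>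
     (\<forall>x\<in>F. \<forall>y\<in>F. x + y \<in> F \<and> x * y \<in> F) \<and>
     (\<forall>x\<in>F. - x \<in> F) \<and> (\<forall>x\<in>F. x \<noteq> 0 \<longrightarrow> inverse x \<in> F)"

definition gen_field :: "complex set \<Rightarrow> complex set" where
  "gen_field S = \<Inter>{F. is_subfield F \<and> S \<subseteq> F}"

definition ring_of_integers :: "complex set \<Rightarrow> complex set" where
  "ring_of_integers K = {x \<in> K. algebraic_int x}"

definition mahler_ring_of_integers :: "complex set \<Rightarrow> real" where
  "mahler_ring_of_integers K =
     Inf {mahler_alg \<alpha> | \<alpha>. \<alpha> \<in> ring_of_integers K \<and> gen_field {\<alpha>} = K}"

end

theory Submission
  imports Defs
begin

lemma sqf_rat:
  fixes q :: rat and N M :: int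
  assumes sq: "squarefree N" and eq: "q^2 * of_int N = of_int M"
  shows "q \<in> \<int>"
proof -
  obtain x y where qo: "quotient_of q = (x, y)" by (cases "quotient_of q") auto
  have q: "q = of_int x / of_int y" using quotient_of_div[OF qo] .
  have y: "y > 0" using quotient_of_denom_pos[OF qo] .
  have cop: "coprime x y" using quotient_of_coprime[OF qo] .
  have "of_int (x^2 * N) = (of_int (M * y^2) :: rat)"
    using eq y by (simp add: q field_simps)
  hence e: "x^2 * N = M * y^2" by (simp only: of_int_eq_iff)
  have "y^2 dvd x^2 * N" by (simp add: e)
  moreover have "coprime (y^2) (x^2)" using cop by (simp add: coprime_commute)
  ultimately have "y^2 dvd N" using coprime_dvd_mult_right_iff by blast
  hence "is_unit y" by (rule sq[unfolded squarefree_def, rule_format])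
  hence "\<bar>y\<bar> = 1" by (simp only: zdvd1_eq)
  hence "y = 1" using y by linarith
  thus ?thesis by (simp add: q)
qed

lemma sqf_not_sq:
  fixes q :: rat and N :: int
  assumes "squarefree N" "N > 1" "q^2 = of_int N"
  shows False
proof -
  have "q \<in> \<int>" using sqf_rat[of 1 q N] assms by simp
  then obtain k where k: "q = of_int k" by (auto elim: Ints_cases)
  hence kk: "k * k = N" using assms(3) by (simp add: power2_eq_square flip: of_int_mult of_int_eq_iff)
  hence "k^2 dvd N" by (simp add: power2_eq_square)
  hence "is_unit k" by (rule assms(1)[unfolded squarefree_def, rule_format])
  hence "\<bar>k\<bar> = 1" by (simp only: zdvd1_eq)
  hence "k * k = 1" by (metis abs_mult_self_eq mult_1)
  thus False using \<open>k*k = N\<close> assms(2) by simp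
qed

lemma subfield_props:
  assumes F: "is_subfield F"
  shows "0 \<in> F" "1 \<in> F" "x \<in> F \<Longrightarrow> y \<in> F \<Longrightarrow> x + y \<in> F"
    "x \<in> F \<Longrightarrow> y \<in> F \<Longrightarrow> x * y \<in> F" "x \<in> F \<Longrightarrow> -x \<in> F"
    "x \<in> F \<Longrightarrow> inverse x \<in> F"
    "x \<in> F \<Longrightarrow> y \<in> F \<Longrightarrow> x - y \<in> F"
    "x \<in> F \<Longrightarrow> y \<in> F \<Longrightarrow> x / y \<in> F"
proof -
  note d = F[unfolded is_subfield_def]
  show "0 \<in> F" "1 \<in> F" using d by blast+
  show add: "x \<in> F \<Longrightarrow> y \<in> F \<Longrightarrow> x + y \<in> F" for x y using d by blast
  show mul: "x \<in> F \<Longrightarrow> y \<in> F \<Longrightarrow> x * y \<in> F" for x y using d by blast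
  show neg: "x \<in> F \<Longrightarrow> -x \<in> F" for x using d by blast
  show inv: "x \<in> F \<Longrightarrow> inverse x \<in> F" for x
  proof (cases "x = 0")
    case True thus ?thesis using d by simp
  next
    case False thus "x \<in> F \<Longrightarrow> inverse x \<in> F" using d by blast
  qed
  show "x \<in> F \<Longrightarrow> y \<in> F \<Longrightarrow> x - y \<in> F"
    unfolding diff_conv_add_uminus by (intro add neg)
  show "x \<in> F \<Longrightarrow> y \<in> F \<Longrightarrow> x / y \<in> F"
    unfolding divide_inverse by (intro mul inv)
qed

lemma subfield_of_nat: assumes "is_subfield F" shows "of_nat k \<in> F"
proof (induction k)
  case 0 thus ?case using subfield_props(1)[OF assms] by simp
next
  case (Suc k)
  have "of_nat k + 1 \<in> F" by (rule subfield_props(3)[OF assms Suc subfield_props(2)[OF assms]])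
  thus ?case by (simp add: add.commute)
qed

lemma subfield_of_int: assumes "is_subfield F" shows "of_int k \<in> F"
proof (cases k rule: int_cases)
  case (nonneg n) thus ?thesis using subfield_of_nat[OF assms, of n] by simp
next
  case (neg n)
  have "- of_nat (Suc n) \<in> F" by (rule subfield_props(5)[OF assms subfield_of_nat[OF assms]])
  thus ?thesis using neg by simp
qed

lemma subfield_of_rat: assumes "is_subfield F" shows "of_rat q \<in> F"
proof -
  obtain x y where qo: "quotient_of q = (x, y)" by (cases "quotient_of q") auto
  have "of_rat q = (of_int x / of_int y :: complex)"
    by (simp add: quotient_of_div[OF qo] of_rat_divide)
  moreover have "(of_int x / of_int y :: complex) \<in> F"
    by (rule subfield_props(8)[OF assms subfield_of_int[OF assms] subfield_of_int[OF assms]])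
  ultimately show ?thesis by simp
qed

lemma gen_field_subfield: "is_subfield (gen_field S)"
  unfolding gen_field_def is_subfield_def by auto

lemma gen_field_sup: "S \<subseteq> gen_field S"
  unfolding gen_field_def by auto

lemma gen_field_least: "is_subfield F \<Longrightarrow> S \<subseteq> F \<Longrightarrow> gen_field S \<subseteq> F"
  unfolding gen_field_def by auto

definition qext :: "complex set \<Rightarrow> complex \<Rightarrow> complex set" where
  "qext F r = {x + y * r | x y. x \<in> F \<and> y \<in> F}"

definition QQ :: "complex set" where "QQ = range of_rat"

lemma QQ_subfield: "is_subfield QQ"
  unfolding is_subfield_def QQ_def
  by (auto simp flip: of_rat_add of_rat_mult of_rat_minus of_rat_inverse)

lemma ext_subfield:
  assumes F: "is_subfield F" and r: "r \<notin> F" and r2: "r * r \<in> F"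
  shows "is_subfield (qext F r)"
proof -
  note fp = subfield_props[OF F]
  have inv: "inverse z \<in> qext F r" if "z \<in> qext F r" for z
  proof (cases "z = 0")
    case True thus ?thesis using fp by (auto simp: qext_def intro!: exI[of _ 0])
  next
    case False
    from that obtain x y where z: "z = x + y * r" "x \<in> F" "y \<in> F" by (auto simp: qext_def)
    define N where "N = x * x - y * y * (r * r)"
    have NF: "N \<in> F" unfolding N_def
      by (intro fp(7) fp(4) z r2)
    have "N \<noteq> 0"
    proof
      assume N0: "N = 0"
      show False
      proof (cases "y = 0")
        case True
        then have "x = 0" using N0 by (simp add: N_def)
        thus False using False z True by simp
      next
        case False
        have "(x / y) * (x / y) = r * r" using N0 False by (simp add: N_def field_simps)
        hence "r = x / y \<or> r = - (x / y)"
          by (metis minus_mult_minus square_eq_iff)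
        moreover have "x / y \<in> F" by (intro fp(8) z)
        ultimately show False using r fp(5) by auto
      qed
    qed
    have zz: "z * (x - y * r) = N" unfolding z(1) N_def by (simp add: algebra_simps)
    have "inverse z = (x - y * r) / N"
      using \<open>N \<noteq> 0\<close> False zz by (simp add: field_simps)
    hence "inverse z = x * inverse N + (- y * inverse N) * r"
      by (simp add: divide_inverse algebra_simps)
    moreover have "x * inverse N \<in> F" "- y * inverse N \<in> F" by (intro fp(4,5,6) z NF)+
    ultimately show ?thesis unfolding qext_def by blast
  qed
  have mem: "u + v * r \<in> qext F r" if "u \<in> F" "v \<in> F" for u v
    unfolding qext_def using that by blast
  show ?thesis unfolding is_subfield_def
  proof (intro conjI ballI impI)
    show "0 \<in> qext F r" using mem[of 0 0] fp by simp
    show "1 \<in> qext F r" using mem[of 1 0] fp by simp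
    fix x y assume "x \<in> qext F r" "y \<in> qext F r"
    then obtain x1 x2 y1 y2 where xy: "x = x1 + x2 * r" "y = y1 + y2 * r"
      "x1 \<in> F" "x2 \<in> F" "y1 \<in> F" "y2 \<in> F" by (auto simp: qext_def)
    have "x + y = (x1 + y1) + (x2 + y2) * r" by (simp add: xy algebra_simps)
    moreover have "x1 + y1 \<in> F" "x2 + y2 \<in> F" by (intro fp(3) xy)+
    ultimately show "x + y \<in> qext F r" using mem by metis
    have "x * y = (x1 * y1 + x2 * y2 * (r * r)) + (x1 * y2 + x2 * y1) * r"
      by (simp add: xy algebra_simps)
    moreover have "x1 * y1 + x2 * y2 * (r * r) \<in> F" by (intro fp(3,4) xy r2)
    moreover have "x1 * y2 + x2 * y1 \<in> F" by (intro fp(3,4) xy)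
    ultimately show "x * y \<in> qext F r" using mem by metis
  next
    fix x assume "x \<in> qext F r"
    then obtain x1 x2 where xy: "x = x1 + x2 * r" "x1 \<in> F" "x2 \<in> F" by (auto simp: qext_def)
    have "-x = (-x1) + (-x2) * r" by (simp add: xy)
    moreover have "-x1 \<in> F" "-x2 \<in> F" by (intro fp(5) xy)+
    ultimately show "-x \<in> qext F r" using mem by metis
  next
    fix x assume "x \<in> qext F r" "x \<noteq> 0" thus "inverse x \<in> qext F r" using inv by blast
  qed
qed

lemma ext_sub: assumes "is_subfield F" shows "F \<subseteq> qext F r"
proof
  fix x assume "x \<in> F"
  hence "x + 0 * r \<in> qext F r" unfolding qext_def using subfield_props(1)[OF assms] by blast
  thus "x \<in> qext F r" by simp
qed

lemma ext_r: assumes "is_subfield F" shows "r \<in> qext F r"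
proof -
  have "0 + 1 * r \<in> qext F r" unfolding qext_def using subfield_props(1,2)[OF assms] by blast
  thus ?thesis by simp
qed


definition EE :: "complex \<Rightarrow> complex \<Rightarrow> rat \<Rightarrow> rat \<Rightarrow> rat \<Rightarrow> rat \<Rightarrow> complex" where
  "EE X Y a b c d = of_rat a + of_rat b * X + of_rat c * Y + of_rat d * (X * Y)"

lemma EE_mult:
  assumes X: "X * X = of_int D1" and Y: "Y * Y = of_int D2"
  shows "EE X Y x1 x2 x3 x4 * EE X Y y1 y2 y3 y4 =
    EE X Y (x1*y1 + x2*y2*of_int D1 + x3*y3*of_int D2 + x4*y4*of_int D1*of_int D2)
           (x1*y2 + x2*y1 + (x3*y4 + x4*y3)*of_int D2)
           (x1*y3 + x3*y1 + (x2*y4 + x4*y2)*of_int D1)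
           (x1*y4 + x4*y1 + x2*y3 + x3*y2)"
proof -
  have e: "of_rat (of_int D1) = X * X" "of_rat (of_int D2) = Y * Y"
    using X Y by simp_all
  show ?thesis unfolding EE_def of_rat_add of_rat_mult e
    by (simp add: algebra_simps)
qed

lemma EE_const: "of_rat h + EE X Y a b c d = EE X Y (h + a) b c d"
  unfolding EE_def by (simp add: of_rat_add algebra_simps)

lemma EE_poly:
  fixes f :: "int poly"
  shows "\<exists>y1 y2 y3 y4. \<forall>X Y. X * X = of_int D1 \<longrightarrow> Y * Y = of_int D2 \<longrightarrow>
     poly (map_poly of_int f) (EE X Y a b c d) = EE X Y y1 y2 y3 y4"
proof (induction f)
  case 0
  show ?case by (intro exI[of _ 0]) (simp add: EE_def)
next
  case (pCons h f)
  from pCons.IH obtain y1 y2 y3 y4 where IH: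
    "\<And>X Y. X * X = of_int D1 \<Longrightarrow> Y * Y = of_int D2 \<Longrightarrow>
     poly (map_poly of_int f) (EE X Y a b c d) = EE X Y y1 y2 y3 y4" by blast
  show ?case
  proof (intro exI allI impI)
    fix X Y :: complex assume X: "X * X = of_int D1" and Y: "Y * Y = of_int D2"
    have "poly (map_poly of_int (pCons h f)) (EE X Y a b c d) =
      of_int h + EE X Y a b c d * poly (map_poly of_int f) (EE X Y a b c d)"
      by (simp add: map_poly_pCons)
    also have "\<dots> = of_rat (of_int h) + EE X Y a b c d * EE X Y y1 y2 y3 y4"
      using IH[OF X Y] by simp
    also have "\<dots> = EE X Y (of_int h + (a*y1 + b*y2*of_int D1 + c*y3*of_int D2 + d*y4*of_int D1*of_int D2))
           (a*y2 + b*y1 + (c*y4 + d*y3)*of_int D2)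
           (a*y3 + c*y1 + (b*y4 + d*y2)*of_int D1)
           (a*y4 + d*y1 + b*y3 + c*y2)"
      unfolding EE_mult[OF X Y] EE_const ..
    finally show "poly (map_poly of_int (pCons h f)) (EE X Y a b c d) = \<dots>" .
  qed
qed


lemma QQ_of_rat[simp]: "of_rat q \<in> QQ" by (simp add: QQ_def)

lemma QQ_of_int[simp]: "of_int k \<in> QQ"
  using QQ_of_rat[of "of_int k"] by simp

lemma not_QQ:
  assumes "X * X = of_int N" "squarefree N" "N > 1"
  shows "X \<notin> QQ"
proof
  assume "X \<in> QQ"
  then obtain q where q: "X = of_rat q" by (auto simp: QQ_def)
  have "of_rat (q^2) = (of_rat (of_int N) :: complex)"
    using assms(1) by (simp add: q power2_eq_square of_rat_mult)
  hence "q^2 = of_int N" by (simp only: of_rat_eq_iff)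
  thus False using sqf_not_sq assms by blast
qed

lemma lin_QQ:
  assumes "X \<notin> QQ" "of_rat x + of_rat y * X = 0"
  shows "x = 0 \<and> y = 0"
proof (cases "y = 0")
  case True thus ?thesis using assms by simp
next
  case False
  have "X = of_rat (- x / y)" using assms(2) False
    by (simp add: of_rat_divide of_rat_minus field_simps add_eq_0_iff)
  thus ?thesis using assms(1) by simp
qed

lemma ext_QQ_cases:
  assumes X: "X \<notin> QQ" "X * X = of_int N1" and Y: "Y * Y = of_int N2" "Y \<in> qext QQ X"
  shows "(\<exists>x::rat. x^2 = of_int N2) \<or> (\<exists>y::rat. y^2 * of_int N1 = of_int N2)"
proof -
  obtain x y where xy: "Y = of_rat x + of_rat y * X"
    using Y(2) by (auto simp: qext_def QQ_def)
  have "Y * Y = of_rat (x*x + y*y*of_int N1) + of_rat (2*x*y) * X"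
    by (simp add: xy of_rat_add of_rat_mult X(2) algebra_simps)
  hence e: "of_rat (x*x + y*y*of_int N1 - of_int N2) + of_rat (2*x*y) * X = 0"
    using Y(1) by (simp add: of_rat_diff of_rat_add of_rat_mult algebra_simps)
  from lin_QQ[OF X(1) e] have "x * x + y * y * of_int N1 = of_int N2" "x * y = 0" by auto
  thus ?thesis by (auto simp: power2_eq_square)
qed

locale bq =
  fixes l m n :: int
  assumes l0: "0 < l" and lm: "l < m" and mn: "m < n"
    and cop_lm: "coprime l m" and cop_ln: "coprime l n" and cop_mn: "coprime m n"
    and sl: "squarefree l" and sm: "squarefree m" and sn: "squarefree n"
begin

definition "A = complex_of_real (sqrt (real_of_int (m * l)))"
definition "B = complex_of_real (sqrt (real_of_int (n * l)))"

lemma AA: "A * A = of_int (m * l)"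
proof -
  have "m * l \<ge> 0" using l0 lm by simp
  hence r: "sqrt (real_of_int (m * l)) * sqrt (real_of_int (m * l)) = real_of_int (m * l)"
    by (simp only: real_sqrt_mult_self)
  have "A * A = complex_of_real (sqrt (real_of_int (m * l)) * sqrt (real_of_int (m * l)))"
    unfolding A_def by (simp only: of_real_mult)
  also have "\<dots> = of_int (m * l)" unfolding r by (simp only: of_real_of_int_eq)
  finally show ?thesis .
qed

lemma BB: "B * B = of_int (n * l)"
proof -
  have "n * l \<ge> 0" using l0 lm mn by simp
  hence r: "sqrt (real_of_int (n * l)) * sqrt (real_of_int (n * l)) = real_of_int (n * l)"
    by (simp only: real_sqrt_mult_self)
  have "B * B = complex_of_real (sqrt (real_of_int (n * l)) * sqrt (real_of_int (n * l)))"
    unfolding B_def by (simp only: of_real_mult)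
  also have "\<dots> = of_int (n * l)" unfolding r by (simp only: of_real_of_int_eq)
  finally show ?thesis .
qed

lemma ABAB: "(A * B) * (A * B) = of_int (m * l * (n * l))"
proof -
  have "(A * B) * (A * B) = (A * A) * (B * B)" by (simp add: algebra_simps)
  thus ?thesis unfolding AA BB by simp
qed

lemma sq_ml: "squarefree (m * l)"
  by (rule squarefree_mult_coprime) (use cop_lm sm sl in \<open>auto simp: coprime_commute\<close>)
lemma sq_nl: "squarefree (n * l)"
  by (rule squarefree_mult_coprime) (use cop_ln sn sl in \<open>auto simp: coprime_commute\<close>)
lemma sq_mn: "squarefree (m * n)"
  by (rule squarefree_mult_coprime) (use cop_mn sm sn in \<open>auto simp: coprime_commute\<close>)

lemma gt: "m * l > 1" "n * l > 1" "m * n > 1" "m > 1" "n > 1"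
proof -
  have "m \<ge> 2" "n \<ge> 3" "l \<ge> 1" using l0 lm mn by auto
  thus "m * l > 1" "n * l > 1" "m * n > 1" "m > 1" "n > 1"
    by (auto intro: less_le_trans[OF _ mult_mono, of 1 2 1 m l] 
                    less_le_trans[OF _ mult_mono, of 1 2 1 n l]
                    less_le_trans[OF _ mult_mono, of 1 2 1 m n])
qed

lemma A_QQ: "A \<notin> QQ" by (rule not_QQ[OF AA sq_ml gt(1)])
lemma B_QQ: "B \<notin> QQ" by (rule not_QQ[OF BB sq_nl gt(2)])
lemma AB_QQ: "A * B \<notin> QQ"
proof
  assume "A * B \<in> QQ"
  then obtain q where q: "A * B = of_rat q" by (auto simp: QQ_def)
  have "of_rat (q * q) = (of_rat (of_int (m * l * (n * l))) :: complex)"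
    using ABAB by (simp add: q of_rat_mult)
  hence "q * q = of_int (m * l * (n * l))" by (simp only: of_rat_eq_iff)
  hence "(q / of_int l)^2 = of_int (m * n)" using l0
    by (simp add: power2_eq_square field_simps)
  thus False using sqf_not_sq[OF sq_mn gt(3)] by blast
qed

end


context bq begin

definition "QA = qext QQ A"
definition "QB = qext QQ B"
definition "QAB = qext QQ (A * B)"
definition "KK = qext QA B"

lemma QA_sub: "is_subfield QA"
  unfolding QA_def by (rule ext_subfield[OF QQ_subfield A_QQ]) (simp only: AA QQ_of_int)
lemma QB_sub: "is_subfield QB"
  unfolding QB_def by (rule ext_subfield[OF QQ_subfield B_QQ]) (simp only: BB QQ_of_int)
lemma QAB_sub: "is_subfield QAB"
  unfolding QAB_def by (rule ext_subfield[OF QQ_subfield AB_QQ]) (simp only: ABAB QQ_of_int)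

lemma B_QA: "B \<notin> QA"
proof
  assume "B \<in> QA"
  from ext_QQ_cases[OF A_QQ AA BB this[unfolded QA_def]]
  show False
  proof
    assume "\<exists>x::rat. x^2 = of_int (n * l)"
    thus False using sqf_not_sq[OF sq_nl gt(2)] by blast
  next
    assume "\<exists>y::rat. y^2 * of_int (m * l) = of_int (n * l)"
    then obtain y :: rat where y: "y^2 * of_int (m * l) = of_int (n * l)" by blast
    hence "y^2 * of_int m = of_int n" using l0 by (simp add: field_simps)
    moreover from this have "y \<in> \<int>" by (rule sqf_rat[OF sm])
    then obtain k where k: "y = of_int k" by (auto elim: Ints_cases)
    ultimately have "k^2 * m = n" by (simp flip: of_int_power of_int_mult of_int_eq_iff)
    hence "m dvd n" by (metis dvd_triv_right)
    hence "is_unit m" using cop_mn by (metis coprime_common_divisor dvd_refl)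
    thus False using gt(4) by simp
  qed
qed

lemma A_QB: "A \<notin> QB"
proof
  assume "A \<in> QB"
  from ext_QQ_cases[OF B_QQ BB AA this[unfolded QB_def]]
  show False
  proof
    assume "\<exists>x::rat. x^2 = of_int (m * l)"
    thus False using sqf_not_sq[OF sq_ml gt(1)] by blast
  next
    assume "\<exists>y::rat. y^2 * of_int (n * l) = of_int (m * l)"
    then obtain y :: rat where y: "y^2 * of_int (n * l) = of_int (m * l)" by blast
    hence "y^2 * of_int n = of_int m" using l0 by (simp add: field_simps)
    moreover from this have "y \<in> \<int>" by (rule sqf_rat[OF sn])
    then obtain k where k: "y = of_int k" by (auto elim: Ints_cases)
    ultimately have "k^2 * n = m" by (simp flip: of_int_power of_int_mult of_int_eq_iff)
    hence "n dvd m" by (metis dvd_triv_right)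
    hence "is_unit n" using cop_mn by (metis coprime_common_divisor dvd_refl coprime_commute)
    thus False using gt(5) by simp
  qed
qed

lemma A_QAB: "A \<notin> QAB"
proof
  assume "A \<in> QAB"
  from ext_QQ_cases[OF AB_QQ ABAB AA this[unfolded QAB_def]]
  show False
  proof
    assume "\<exists>x::rat. x^2 = of_int (m * l)"
    thus False using sqf_not_sq[OF sq_ml gt(1)] by blast
  next
    assume "\<exists>y::rat. y^2 * of_int (m * l * (n * l)) = of_int (m * l)"
    then obtain y :: rat where y: "y^2 * of_int (m * l * (n * l)) = of_int (m * l)" by blast
    have "m * l \<noteq> 0" using gt(1) by linarith
    hence "y^2 * of_int (n * l) = of_int 1" using y by (simp add: field_simps)
    moreover from this have "y \<in> \<int>" by (rule sqf_rat[OF sq_nl])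
    then obtain k where k: "y = of_int k" by (auto elim: Ints_cases)
    ultimately have "k^2 * (n * l) = 1" by (simp flip: of_int_power of_int_mult of_int_eq_iff)
    hence "is_unit (n * l)" by (metis dvd_triv_right)
    thus False using gt(2) by simp
  qed
qed

lemma KK_sub: "is_subfield KK"
  unfolding KK_def
proof (rule ext_subfield[OF QA_sub B_QA])
  show "B * B \<in> QA" unfolding BB by (rule subfield_of_int[OF QA_sub])
qed

lemma A_QA: "A \<in> QA" unfolding QA_def by (rule ext_r[OF QQ_subfield])

lemma K_sub_KK: "gen_field {A, B} \<subseteq> KK"
proof (rule gen_field_least[OF KK_sub])
  have "A \<in> KK" using A_QA ext_sub[OF QA_sub] unfolding KK_def by blast
  moreover have "B \<in> KK" unfolding KK_def by (rule ext_r[OF QA_sub])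
  ultimately show "{A, B} \<subseteq> KK" by blast
qed

lemma KK_repr:
  assumes "z \<in> KK" shows "\<exists>a b c d. z = EE A B a b c d"
proof -
  obtain P Q where PQ: "z = P + Q * B" "P \<in> QA" "Q \<in> QA" using assms by (auto simp: KK_def qext_def)
  obtain a b where P: "P = of_rat a + of_rat b * A" using PQ(2) by (auto simp: QA_def qext_def QQ_def)
  obtain c d where Q: "Q = of_rat c + of_rat d * A" using PQ(3) by (auto simp: QA_def qext_def QQ_def)
  have "z = EE A B a b c d" unfolding PQ P Q EE_def by (simp add: algebra_simps)
  thus ?thesis by blast
qed

lemma EE_zero:
  assumes "EE A B y1 y2 y3 y4 = 0"
  shows "y1 = 0 \<and> y2 = 0 \<and> y3 = 0 \<and> y4 = 0"
proof -
  define P where "P = of_rat y1 + of_rat y2 * A"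
  define Q where "Q = of_rat y3 + of_rat y4 * A"
  have PQ: "P \<in> QA" "Q \<in> QA" unfolding P_def Q_def QA_def qext_def using QQ_of_rat by blast+
  have e: "P + Q * B = 0" using assms unfolding EE_def P_def Q_def by (simp add: algebra_simps)
  have "Q = 0"
  proof (rule ccontr)
    assume "Q \<noteq> 0"
    hence "B = - P / Q" using e by (simp add: field_simps add_eq_0_iff)
    moreover have "- P / Q \<in> QA" by (intro subfield_props(5,8)[OF QA_sub] PQ)
    ultimately show False using B_QA by simp
  qed
  hence "P = 0" using e by simp
  show ?thesis using lin_QQ[OF A_QQ, of y1 y2] lin_QQ[OF A_QQ, of y3 y4] \<open>P = 0\<close> \<open>Q = 0\<close>
    unfolding P_def Q_def by auto
qed

end


abbreviation ip :: "int poly \<Rightarrow> complex \<Rightarrow> complex" where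
  "ip p x \<equiv> poly (map_poly of_int p) x"

lemma ipoly_mult: "map_poly (of_int :: int \<Rightarrow> complex) (p * q) = map_poly of_int p * map_poly of_int q"
  by (intro poly_eqI) (simp add: coeff_map_poly coeff_mult)

lemma ip_mult: "ip (p * q) x = ip p x * ip q x"
  by (simp add: ipoly_mult)

lemma ip_add: "ip (p + q) x = ip p x + ip q x"
proof -
  have "map_poly (of_int :: int \<Rightarrow> complex) (p + q) = map_poly of_int p + map_poly of_int q"
    by (intro poly_eqI) (simp add: coeff_map_poly)
  thus ?thesis by simp
qed

lemma ip_smult: "ip (smult c p) x = of_int c * ip p x"
  by (simp add: map_poly_smult)

lemma ip_eq0: "(map_poly (of_int :: int \<Rightarrow> complex) p = 0) = (p = 0)"
  by (auto simp: poly_eq_iff coeff_map_poly)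


lemma minpoly_r:
  fixes \<alpha> :: complex and g :: "int poly"
  assumes g: "g \<noteq> 0" "ip g \<alpha> = 0"
  shows "\<exists>r. ip r \<alpha> = 0 \<and> content r = 1 \<and> lead_coeff r > 0 \<and> irreducible r \<and>
     (\<forall>q. ip q \<alpha> = 0 \<longrightarrow> r dvd q)"
proof -
  define S where "S = {q. q \<noteq> 0 \<and> ip q \<alpha> = 0}"
  define d0 where "d0 = (LEAST d. \<exists>q\<in>S. degree q = d)"
  have "\<exists>q\<in>S. degree q = d0" unfolding d0_def
    by (rule LeastI[of _ "degree g"]) (use g in \<open>auto simp: S_def\<close>)
  then obtain r0 where r0: "r0 \<in> S" "degree r0 = d0" by blast
  have minim: "d0 \<le> degree q" if "q \<in> S" for q
    unfolding d0_def by (rule Least_le) (use that in blast)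
  define r1 where "r1 = primitive_part r0"
  have "r0 \<noteq> 0" using r0 by (simp add: S_def)
  hence c0: "content r0 \<noteq> 0" by simp
  have "ip r0 \<alpha> = of_int (content r0) * ip r1 \<alpha>"
    unfolding r1_def by (subst ip_smult[symmetric]) simp
  moreover have "ip r0 \<alpha> = 0" using r0(1) by (simp add: S_def)
  ultimately have "of_int (content r0) * ip r1 \<alpha> = 0" by simp
  hence r1a: "ip r1 \<alpha> = 0" using c0 by simp
  have r1nz: "r1 \<noteq> 0" using \<open>r0 \<noteq> 0\<close> by (simp add: r1_def)
  have cr1: "content r1 = 1" using \<open>r0 \<noteq> 0\<close> by (simp add: r1_def)
  define r where "r = smult (sgn (lead_coeff r1)) r1"
  have lr1: "lead_coeff r1 \<noteq> 0" using r1nz by simp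
  have "sgn (lead_coeff r1) \<noteq> 0" using lr1 by (simp add: sgn_0_0)
  hence rnz: "r \<noteq> 0" using r1nz by (simp add: r_def)
  have ra: "ip r \<alpha> = 0" by (simp add: r_def ip_smult r1a)
  have cr: "content r = 1" using cr1 lr1 by (simp add: r_def)
  have sg: "sgn a * a = \<bar>a\<bar>" for a :: int by (cases a "0::int" rule: linorder_cases) auto
  have "lead_coeff r = sgn (lead_coeff r1) * lead_coeff r1" using \<open>sgn (lead_coeff r1) \<noteq> 0\<close>
    by (simp add: r_def)
  hence lr: "lead_coeff r > 0" using lr1 sg by simp
  have dr: "degree r = d0" using \<open>sgn (lead_coeff r1) \<noteq> 0\<close> r0 unfolding r_def
    by (simp only: degree_smult_eq if_False) (simp add: r1_def)
  have rS: "r \<in> S" using rnz ra by (simp add: S_def)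
  have dvd: "r dvd q" if q: "ip q \<alpha> = 0" for q
  proof -
    obtain s t where st: "pseudo_divmod q r = (s, t)" by (cases "pseudo_divmod q r") auto
    define c where "c = coeff r (degree r) ^ (Suc (degree q) - degree r)"
    have e: "smult c q = r * s + t" and dt: "t = 0 \<or> degree t < degree r"
      using pseudo_divmod[OF rnz st] unfolding c_def by auto
    have "ip (smult c q) \<alpha> = ip (r * s + t) \<alpha>" by (simp only: e)
    hence "ip t \<alpha> = 0" by (simp add: ip_smult ip_add ip_mult q ra)
    have "t = 0"
    proof (rule ccontr)
      assume "t \<noteq> 0"
      hence "t \<in> S" using \<open>ip t \<alpha> = 0\<close> by (simp add: S_def)
      hence "d0 \<le> degree t" by (rule minim)
      thus False using dt \<open>t \<noteq> 0\<close> dr by simp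
    qed
    hence "r dvd smult c q" using e by simp
    hence "fract_poly r dvd fract_poly (smult c q)" by (rule fract_poly_dvd)
    hence "fract_poly r dvd smult (to_fract c) (fract_poly q)" by simp
    moreover have "c \<noteq> 0" using rnz by (simp add: c_def)
    hence "to_fract c \<noteq> 0" by simp
    ultimately have "fract_poly r dvd fract_poly q" by (rule dvd_smult_cancel)
    thus ?thesis using cr by (rule fract_poly_dvdD)
  qed
  have dpos: "degree r \<noteq> 0"
  proof
    assume "degree r = 0"
    then obtain c where "r = [:c:]" by (metis degree_eq_zeroE)
    thus False using ra rnz by (simp add: map_poly_pCons)
  qed
  have irr: "irreducible r"
  proof (rule irreducibleI)
    show "r \<noteq> 0" by (rule rnz)
    show "\<not> r dvd 1" using dpos by (auto simp: is_unit_poly_iff)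
  next
    have key: "y dvd 1" if xy: "r = x * y" and xa: "ip x \<alpha> = 0" for x y
    proof -
      have "x \<noteq> 0" "y \<noteq> 0" using xy rnz by auto
      hence "x \<in> S" using xa by (simp add: S_def)
      hence "d0 \<le> degree x" by (rule minim)
      moreover have "degree r = degree x + degree y" using xy \<open>x \<noteq> 0\<close> \<open>y \<noteq> 0\<close>
        by (simp add: degree_mult_eq)
      ultimately have "degree y = 0" using dr by simp
      then obtain c where yc: "y = [:c:]" by (metis degree_eq_zeroE)
      have "content x * content y = 1" using cr xy by (simp add: content_mult)
      hence "content y dvd 1" by (metis dvd_triv_right)
      hence "c dvd 1" using yc by simp
      thus ?thesis using yc by (simp add: is_unit_const_poly_iff)
    qed
    fix x y assume xy: "r = x * y"
    have "ip x \<alpha> * ip y \<alpha> = 0" using ra xy by (simp add: ip_mult)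
    hence "ip x \<alpha> = 0 \<or> ip y \<alpha> = 0" by simp
    thus "x dvd 1 \<or> y dvd 1"
    proof
      assume "ip x \<alpha> = 0" thus ?thesis using key[OF xy] by blast
    next
      assume "ip y \<alpha> = 0" thus ?thesis using key[of y x] xy by (simp add: mult.commute)
    qed
  qed
  show ?thesis using ra cr lr irr dvd by blast
qed

lemma min_int_poly_char:
  fixes \<alpha> :: complex and g :: "int poly"
  assumes g: "g \<noteq> 0" "ip g \<alpha> = 0"
  shows "ip (min_int_poly \<alpha>) \<alpha> = 0 \<and> lead_coeff (min_int_poly \<alpha>) > 0 \<and>
     (\<forall>q. ip q \<alpha> = 0 \<longrightarrow> min_int_poly \<alpha> dvd q)"
proof -
  obtain r where r: "ip r \<alpha> = 0" "content r = 1" "lead_coeff r > 0" "irreducible r"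
    "\<And>q. ip q \<alpha> = 0 \<Longrightarrow> r dvd q" using minpoly_r[OF g] by blast
  have "min_int_poly \<alpha> = r" unfolding min_int_poly_def
  proof (rule the_equality)
    show "irreducible r \<and> lead_coeff r > 0 \<and> ip r \<alpha> = 0" using r by blast
  next
    fix p assume p: "irreducible p \<and> lead_coeff p > 0 \<and> ip p \<alpha> = 0"
    then obtain s where s: "p = r * s" using r(5) by blast
    have "\<not> r dvd 1" using r(4) by (simp add: irreducible_def)
    hence "s dvd 1" using irreducibleD[of p r s] p s by blast
    then obtain c where c: "s = [:c:]" "c dvd 1" by (auto simp: is_unit_poly_iff)
    have "lead_coeff p = lead_coeff r * c" using s c by (simp add: lead_coeff_mult)
    hence "c > 0" using p r(3) by (simp add: zero_less_mult_iff)
    hence "c = 1" using c(2) by (simp add: zdvd1_eq)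
    thus "p = r" using s c by simp
  qed
  thus ?thesis using r by simp
qed


definition "kq b c d D1 D2 = b*b*D1 - c*c*D2 - d*d*D1*D2"
definition "h2 b c d D1 D2 = 2 * kq b c d D1 D2 - 4*b*b*D1"
definition "h1 b c d D1 D2 = -8*b*c*d*D1*D2"
definition "h0 b c d D1 D2 = kq b c d D1 D2 * kq b c d D1 D2 - 4*c*c*d*d*D1*D2*D2"
definition "p1 a = -4 * a"
definition "p2 a b c d D1 D2 = 6*a*a + h2 b c d D1 D2"
definition "p3 a b c d D1 D2 = -4*a*a*a - 2*a*h2 b c d D1 D2 + h1 b c d D1 D2"
definition "p4 a b c d D1 D2 = a*a*a*a + a*a*h2 b c d D1 D2 - a*h1 b c d D1 D2 + h0 b c d D1 D2"

lemma quartic_id: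
  fixes X Y z a b c d :: "'a::field_char_0"
  shows "(z - (a + b*X + c*Y + d*(X*Y))) * (z - (a + b*X + c*(-Y) + d*(X*(-Y)))) *
         ((z - (a + b*(-X) + c*Y + d*((-X)*Y))) * (z - (a + b*(-X) + c*(-Y) + d*((-X)*(-Y))))) =
    z*z*z*z + p1 a * z*z*z + p2 a b c d (X*X) (Y*Y) * z*z + p3 a b c d (X*X) (Y*Y) * z
      + p4 a b c d (X*X) (Y*Y)"
proof -
  define u where "u = z - a"
  define S where "S = 2*b*u + 2*c*d*(Y*Y)"
  define k where "k = kq b c d (X*X) (Y*Y)"
  have f1: "(z - (a + b*X + c*Y + d*(X*Y))) * (z - (a + b*X + c*(-Y) + d*(X*(-Y)))) = (u*u + k) - X * S"
    unfolding u_def S_def k_def kq_def by algebra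
  have f2: "(z - (a + b*(-X) + c*Y + d*((-X)*Y))) * (z - (a + b*(-X) + c*(-Y) + d*((-X)*(-Y)))) = (u*u + k) + X * S"
    unfolding u_def S_def k_def kq_def by algebra
  have "((u*u + k) - X * S) * ((u*u + k) + X * S) = (u*u+k)*(u*u+k) - (X*X)*(S*S)" by algebra
  also have "\<dots> = z*z*z*z + p1 a * z*z*z + p2 a b c d (X*X) (Y*Y) * z*z + p3 a b c d (X*X) (Y*Y) * z
      + p4 a b c d (X*X) (Y*Y)"
    unfolding u_def S_def k_def p1_def p2_def p3_def p4_def h2_def h1_def h0_def by algebra
  finally show ?thesis using f1 f2 by simp
qed

definition "s1 a b c d D1 D2 = 3 * p1 a * p1 a - 8 * p2 a b c d D1 D2"
definition "s2 a b c d D1 D2 = 3 * p1 a ^ 4 - 16 * p1 a ^ 2 * p2 a b c d D1 D2 + 16 * p2 a b c d D1 D2 ^ 2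
   + 16 * p1 a * p3 a b c d D1 D2 - 64 * p4 a b c d D1 D2"
definition "s3 a b c d D1 D2 = (8 * p3 a b c d D1 D2 - 4 * p1 a * p2 a b c d D1 D2 + p1 a ^ 3) ^ 2"

lemma resolvent:
  fixes a b c d D1 D2 :: "'a::field_char_0"
  defines "t1 \<equiv> 16*b*b*D1" and "t2 \<equiv> 16*c*c*D2" and "t3 \<equiv> 16*d*d*D1*D2"
  shows "t^3 - s1 a b c d D1 D2 * t^2 + s2 a b c d D1 D2 * t - s3 a b c d D1 D2 = (t - t1) * (t - t2) * (t - t3)"
proof -
  have e1: "s1 a b c d D1 D2 = t1 + t2 + t3"
    unfolding s1_def p1_def p2_def h2_def kq_def t1_def t2_def t3_def by algebra
  have "s2 a b c d D1 D2 = 16 * h2 b c d D1 D2 ^ 2 - 64 * h0 b c d D1 D2"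
    unfolding s2_def p1_def p2_def p3_def p4_def by algebra
  also have "\<dots> = t1*t2 + t1*t3 + t2*t3"
    unfolding h2_def h0_def kq_def t1_def t2_def t3_def by algebra
  finally have e2: "s2 a b c d D1 D2 = t1*t2 + t1*t3 + t2*t3" .
  have "8 * p3 a b c d D1 D2 - 4 * p1 a * p2 a b c d D1 D2 + p1 a ^ 3 = 8 * h1 b c d D1 D2"
    unfolding p1_def p2_def p3_def by algebra
  hence "s3 a b c d D1 D2 = 64 * h1 b c d D1 D2 ^ 2" unfolding s3_def by algebra
  also have "\<dots> = t1*t2*t3" unfolding h1_def t1_def t2_def t3_def by algebra
  finally have e3: "s3 a b c d D1 D2 = t1*t2*t3" .
  show ?thesis unfolding e1 e2 e3 by algebra
qed


lemma of_rat_p: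
  "(of_rat (p1 a) :: 'a::field_char_0) = p1 (of_rat a)"
  "(of_rat (p2 a b c d D1 D2) :: 'a) = p2 (of_rat a) (of_rat b) (of_rat c) (of_rat d) (of_rat D1) (of_rat D2)"
  "(of_rat (p3 a b c d D1 D2) :: 'a) = p3 (of_rat a) (of_rat b) (of_rat c) (of_rat d) (of_rat D1) (of_rat D2)"
  "(of_rat (p4 a b c d D1 D2) :: 'a) = p4 (of_rat a) (of_rat b) (of_rat c) (of_rat d) (of_rat D1) (of_rat D2)"
  unfolding p1_def p2_def p3_def p4_def h2_def h1_def h0_def kq_def
  by (simp_all add: of_rat_add of_rat_mult of_rat_diff of_rat_minus)

lemma common_denom: fixes q :: rat shows "\<exists>d>0. of_int d * q \<in> \<int>"
proof -
  obtain x y where qo: "quotient_of q = (x, y)" by (cases "quotient_of q") auto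
  have "q = of_int x / of_int y" "y > 0" using quotient_of_div[OF qo] quotient_of_denom_pos[OF qo] by auto
  hence "of_int y * q = of_int x" by simp
  thus ?thesis using \<open>y > 0\<close> by (intro exI[of _ y]) auto
qed

lemma common_denom4: fixes q1 q2 q3 q4 :: rat
  shows "\<exists>N>0. of_int N * q1 \<in> \<int> \<and> of_int N * q2 \<in> \<int> \<and> of_int N * q3 \<in> \<int> \<and> of_int N * q4 \<in> \<int>"
proof -
  obtain d1 d2 d3 d4 where d: "d1 > 0" "of_int d1 * q1 \<in> \<int>" "d2 > 0" "of_int d2 * q2 \<in> \<int>"
     "d3 > 0" "of_int d3 * q3 \<in> \<int>" "d4 > 0" "of_int d4 * q4 \<in> \<int>"
    using common_denom by meson
  have e: "of_int (d1*d2*d3*d4) * q1 = of_int (d2*d3*d4) * (of_int d1 * q1)"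
       "of_int (d1*d2*d3*d4) * q2 = of_int (d1*d3*d4) * (of_int d2 * q2)"
       "of_int (d1*d2*d3*d4) * q3 = of_int (d1*d2*d4) * (of_int d3 * q3)"
       "of_int (d1*d2*d3*d4) * q4 = of_int (d1*d2*d3) * (of_int d4 * q4)"
    by (simp_all add: algebra_simps)
  have "of_int (d1*d2*d3*d4) * q1 \<in> \<int>" unfolding e(1) by (intro Ints_mult Ints_of_int d)
  moreover have "of_int (d1*d2*d3*d4) * q2 \<in> \<int>" unfolding e(2) by (intro Ints_mult Ints_of_int d)
  moreover have "of_int (d1*d2*d3*d4) * q3 \<in> \<int>" unfolding e(3) by (intro Ints_mult Ints_of_int d)
  moreover have "of_int (d1*d2*d3*d4) * q4 \<in> \<int>" unfolding e(4) by (intro Ints_mult Ints_of_int d)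
  moreover have "d1*d2*d3*d4 > 0" using d by simp
  ultimately show ?thesis by blast
qed

context bq begin

abbreviation "K \<equiv> gen_field {A, B}"

lemma alpha_cases:
  assumes "\<alpha> \<in> K" "gen_field {\<alpha>} = K"
  obtains a b c d where "\<alpha> = EE A B a b c d" "c \<noteq> 0 \<or> d \<noteq> 0" "b \<noteq> 0 \<or> d \<noteq> 0" "b \<noteq> 0 \<or> c \<noteq> 0"
proof -
  obtain a b c d where e: "\<alpha> = EE A B a b c d" using KK_repr K_sub_KK assms(1) by blast
  have AK: "A \<in> K" and BK: "B \<in> K" using gen_field_sup[of "{A, B}"] by auto
  have sub: "K \<subseteq> F" if "is_subfield F" "\<alpha> \<in> F" for F
    using gen_field_least[of F "{\<alpha>}"] that assms(2) by auto
  have "c \<noteq> 0 \<or> d \<noteq> 0"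
  proof (rule ccontr)
    assume "\<not> (c \<noteq> 0 \<or> d \<noteq> 0)"
    hence "\<alpha> = of_rat a + of_rat b * A" using e by (simp add: EE_def)
    hence "\<alpha> \<in> QA" unfolding QA_def qext_def using QQ_of_rat by blast
    hence "B \<in> QA" using sub[OF QA_sub] BK by blast
    thus False using B_QA by blast
  qed
  moreover have "b \<noteq> 0 \<or> d \<noteq> 0"
  proof (rule ccontr)
    assume "\<not> (b \<noteq> 0 \<or> d \<noteq> 0)"
    hence "\<alpha> = of_rat a + of_rat c * B" using e by (simp add: EE_def)
    hence "\<alpha> \<in> QB" unfolding QB_def qext_def using QQ_of_rat by blast
    hence "A \<in> QB" using sub[OF QB_sub] AK by blast
    thus False using A_QB by blast
  qed
  moreover have "b \<noteq> 0 \<or> c \<noteq> 0"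
  proof (rule ccontr)
    assume "\<not> (b \<noteq> 0 \<or> c \<noteq> 0)"
    hence "\<alpha> = of_rat a + of_rat d * (A * B)" using e by (simp add: EE_def)
    hence "\<alpha> \<in> QAB" unfolding QAB_def qext_def using QQ_of_rat by blast
    hence "A \<in> QAB" using sub[OF QAB_sub] AK by blast
    thus False using A_QAB by blast
  qed
  ultimately show ?thesis using e that by blast
qed

lemma conj_root:
  assumes "ip f (EE A B a b c d) = 0" "X * X = of_int (m * l)" "Y * Y = of_int (n * l)"
  shows "ip f (EE X Y a b c d) = 0"
proof -
  obtain y1 y2 y3 y4 where y: "\<And>X Y. X * X = of_int (m * l) \<Longrightarrow> Y * Y = of_int (n * l) \<Longrightarrow>
     ip f (EE X Y a b c d) = EE X Y y1 y2 y3 y4"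
    using EE_poly[of "m * l" "n * l" f a b c d] by blast
  have "EE A B y1 y2 y3 y4 = 0" using y[OF AA BB] assms(1) by simp
  hence "y1 = 0 \<and> y2 = 0 \<and> y3 = 0 \<and> y4 = 0" by (rule EE_zero)
  thus ?thesis using y[OF assms(2,3)] by (simp add: EE_def)
qed

lemma UW_ne:
  fixes U W :: int
  assumes "U \<noteq> 0 \<or> W \<noteq> 0"
  shows "l * U^2 - m * W^2 \<noteq> 0"
proof
  assume h: "l * U^2 - m * W^2 = 0"
  show False
  proof (cases "W = 0")
    case True
    thus False using h assms l0 by simp
  next
    case False
    have "(of_int U / of_int W :: rat)^2 * of_int l = of_int m"
      using h False by (simp add: field_simps power2_eq_square flip: of_int_mult of_int_diff)
    hence "(of_int U / of_int W :: rat) \<in> \<int>" by (rule sqf_rat[OF sl])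
    then obtain k where k: "(of_int U / of_int W :: rat) = of_int k" by (auto elim: Ints_cases)
    have "of_int (k^2 * l) = (of_int m :: rat)"
      using \<open>(of_int U / of_int W :: rat)^2 * of_int l = of_int m\<close> unfolding k by simp
    hence km: "k^2 * l = m" by (simp only: of_int_eq_iff)
    hence "l dvd m" by (metis dvd_triv_right)
    hence "is_unit l" using cop_lm by (metis coprime_common_divisor dvd_refl)
    hence "l = 1" using l0 by (simp add: zdvd1_eq)
    hence "k^2 dvd m" using km by simp
    hence "is_unit k" by (rule sm[unfolded squarefree_def, rule_format])
    hence "\<bar>k\<bar> = 1" by (simp only: zdvd1_eq)
    hence "k^2 = 1" by (metis power2_abs power_one)
    thus False using km \<open>l = 1\<close> gt(4) by simp
  qed
qed

end


lemma cubic_int: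
  fixes t s1 s2 s3 :: rat
  assumes "s1 \<in> \<int>" "s2 \<in> \<int>" "s3 \<in> \<int>" "t^3 - s1*t^2 + s2*t - s3 = 0"
  shows "t \<in> \<int>"
proof -
  obtain k1 k2 k3 where ks: "s1 = of_int k1" "s2 = of_int k2" "s3 = of_int k3"
    using assms(1-3) by (auto elim!: Ints_cases)
  define r where "r = (of_rat t :: real)"
  define p :: "real poly" where "p = [:- of_int k3, of_int k2, - of_int k1, 1:]"
  have "lead_coeff p = 1" by (simp add: p_def)
  moreover have "\<forall>i. coeff p i \<in> \<int>" by (auto simp: p_def coeff_pCons split: nat.split)
  moreover have "poly p r = 0"
  proof -
    have "poly p r = of_rat (t^3 - s1*t^2 + s2*t - s3)"
      by (simp add: p_def r_def ks of_rat_add of_rat_mult of_rat_diff of_rat_power algebra_simps power2_eq_square power3_eq_cube)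
    thus ?thesis using assms(4) by simp
  qed
  ultimately have "algebraic_int r" by (rule algebraic_int.intros)
  moreover have "r \<in> \<rat>" by (simp add: r_def)
  ultimately have "r \<in> \<int>" by (rule rational_algebraic_int_is_int)
  then obtain k where "r = of_int k" by (auto elim: Ints_cases)
  hence "of_rat t = (of_rat (of_int k) :: real)" by (simp add: r_def)
  hence "t = of_int k" by (simp only: of_rat_eq_iff)
  thus ?thesis by simp
qed

lemma g_bound:
  fixes x y :: complex
  shows "cmod (x - y) \<le> 2 * max 1 (cmod x) * max 1 (cmod y)"
proof -
  define gx where "gx = max 1 (cmod x)"
  define gy where "gy = max 1 (cmod y)"
  have "gx \<ge> 1" "gy \<ge> 1" "cmod x \<le> gx" "cmod y \<le> gy" by (auto simp: gx_def gy_def)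
  moreover have "gx * (gy - 1) \<ge> 0" "gy * (gx - 1) \<ge> 0" using calculation by simp_all
  moreover have "cmod (x - y) \<le> cmod x + cmod y" by (rule norm_triangle_ineq4)
  moreover have "2 * gx * gy = gx + gy + gx * (gy - 1) + gy * (gx - 1)" by (simp add: algebra_simps)
  ultimately have "cmod (x - y) \<le> 2 * gx * gy" by linarith
  thus ?thesis by (simp add: gx_def gy_def)
qed

context bq begin

lemma EE_zero3:
  assumes "EE A B 0 x y z = 0" shows "x = 0 \<and> y = 0 \<and> z = 0"
  using EE_zero[OF assms] by simp

lemma main_bound:
  assumes "\<alpha> \<in> ring_of_integers K" "gen_field {\<alpha>} = K"
  shows "real_of_int n / 16 \<le> mahler_alg \<alpha>"
proof -
  have \<alpha>K: "\<alpha> \<in> K" and ai: "algebraic_int \<alpha>" using assms(1) by (auto simp: ring_of_integers_def)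
  obtain a b c d where ab: "\<alpha> = EE A B a b c d" "c \<noteq> 0 \<or> d \<noteq> 0" "b \<noteq> 0 \<or> d \<noteq> 0" "b \<noteq> 0 \<or> c \<noteq> 0"
    using alpha_cases[OF \<alpha>K assms(2)] by blast
  obtain g where g: "ip g \<alpha> = 0" "lead_coeff g = 1" using ai by (auto simp: algebraic_int_altdef_ipoly)
  have gnz: "g \<noteq> 0" using g(2) by auto
  define mp where "mp = min_int_poly \<alpha>"
  have mp: "ip mp \<alpha> = 0" "lead_coeff mp > 0" "\<And>q. ip q \<alpha> = 0 \<Longrightarrow> mp dvd q"
    using min_int_poly_char[OF gnz g(1)] unfolding mp_def by auto
  have "mp dvd g" by (rule mp(3)[OF g(1)])
  then obtain s where "g = mp * s" by blast
  hence "lead_coeff mp * lead_coeff s = 1" using g(2) by (simp add: lead_coeff_mult)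
  hence "lead_coeff mp dvd 1" by (metis dvd_triv_left)
  hence "\<bar>lead_coeff mp\<bar> = 1" by (simp only: zdvd1_eq)
  hence lm1: "lead_coeff mp = 1" using mp(2) by simp
  define D1 where "D1 = (of_int (m * l) :: rat)"
  define D2 where "D2 = (of_int (n * l) :: rat)"
  define \<beta>1 where "\<beta>1 = EE A B a b c d"
  define \<beta>2 where "\<beta>2 = EE A (-B) a b c d"
  define \<beta>3 where "\<beta>3 = EE (-A) B a b c d"
  define \<beta>4 where "\<beta>4 = EE (-A) (-B) a b c d"
  have AA': "(-A) * (-A) = of_int (m * l)" and BB': "(-B) * (-B) = of_int (n * l)" using AA BB by simp_all
  have mp0: "ip mp (EE A B a b c d) = 0" using mp(1) ab(1) by simp
  have roots: "ip mp \<beta>1 = 0" "ip mp \<beta>2 = 0" "ip mp \<beta>3 = 0" "ip mp \<beta>4 = 0"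
    unfolding \<beta>1_def \<beta>2_def \<beta>3_def \<beta>4_def
    using conj_root[OF mp0 AA BB] conj_root[OF mp0 AA BB'] conj_root[OF mp0 AA' BB] conj_root[OF mp0 AA' BB'] 
    by auto
  have d12: "\<beta>1 - \<beta>2 = EE A B 0 0 (2*c) (2*d)"
   and d13: "\<beta>1 - \<beta>3 = EE A B 0 (2*b) 0 (2*d)"
   and d14: "\<beta>1 - \<beta>4 = EE A B 0 (2*b) (2*c) 0"
   and d23: "\<beta>2 - \<beta>3 = EE A B 0 (2*b) (-2*c) 0"
   and d24: "\<beta>2 - \<beta>4 = EE A B 0 (2*b) 0 (-2*d)"
   and d34: "\<beta>3 - \<beta>4 = EE A B 0 0 (2*c) (-2*d)"
    unfolding \<beta>1_def \<beta>2_def \<beta>3_def \<beta>4_def EE_def by (simp_all add: of_rat_mult of_rat_minus algebra_simps)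
  have dist: "\<beta>1 \<noteq> \<beta>2" "\<beta>1 \<noteq> \<beta>3" "\<beta>1 \<noteq> \<beta>4" "\<beta>2 \<noteq> \<beta>3" "\<beta>2 \<noteq> \<beta>4" "\<beta>3 \<noteq> \<beta>4"
    using EE_zero3[of "0" "2*c" "2*d"] EE_zero3[of "2*b" 0 "2*d"] EE_zero3[of "2*b" "2*c" 0]
      EE_zero3[of "2*b" "-2*c" 0] EE_zero3[of "2*b" 0 "-2*d"] EE_zero3[of 0 "2*c" "-2*d"]
      d12 d13 d14 d23 d24 d34 ab(2-4) by auto
  define Qc :: "complex poly" where "Qc = [:of_rat (p4 a b c d D1 D2), of_rat (p3 a b c d D1 D2),
      of_rat (p2 a b c d D1 D2), of_rat (p1 a), 1:]"
  have D1A: "of_rat D1 = A * A" and D2B: "of_rat D2 = B * B" by (simp_all add: D1_def D2_def AA BB of_rat_mult)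
  have Qc_eval: "poly Qc z = (z - \<beta>1) * (z - \<beta>2) * ((z - \<beta>3) * (z - \<beta>4))" for z
  proof -
    have "(z - \<beta>1) * (z - \<beta>2) * ((z - \<beta>3) * (z - \<beta>4)) =
      z*z*z*z + p1 (of_rat a) * z*z*z + p2 (of_rat a) (of_rat b) (of_rat c) (of_rat d) (A*A) (B*B) * z*z
      + p3 (of_rat a) (of_rat b) (of_rat c) (of_rat d) (A*A) (B*B) * z
      + p4 (of_rat a) (of_rat b) (of_rat c) (of_rat d) (A*A) (B*B)"
      unfolding \<beta>1_def \<beta>2_def \<beta>3_def \<beta>4_def EE_def by (rule quartic_id)
    moreover have "poly Qc z = of_rat (p4 a b c d D1 D2) + z * (of_rat (p3 a b c d D1 D2) +
       z * (of_rat (p2 a b c d D1 D2) + z * (of_rat (p1 a) + z)))" by (simp add: Qc_def)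
    ultimately show ?thesis unfolding of_rat_p D1A D2B by (simp add: algebra_simps)
  qed
  define S where "S = {\<beta>1, \<beta>2, \<beta>3, \<beta>4}"
  have Qc_root: "poly Qc z = 0 \<longleftrightarrow> z \<in> S" for z unfolding Qc_eval S_def by auto
  have cardS: "card S = 4" using dist by (simp add: S_def)
  have degQc: "degree Qc = 4" by (simp add: Qc_def)
  have lcQc: "lead_coeff Qc = 1" by (simp add: Qc_def degQc)
  have Qcnz: "Qc \<noteq> 0" using lcQc by auto
  obtain N where N: "N > 0" "of_int N * p1 a \<in> \<int>" "of_int N * p2 a b c d D1 D2 \<in> \<int>"
    "of_int N * p3 a b c d D1 D2 \<in> \<int>" "of_int N * p4 a b c d D1 D2 \<in> \<int>"
    using common_denom4 by blast
  obtain z1 where z1: "of_int N * p1 a = of_int z1" using N(2) by (auto elim: Ints_cases)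
  obtain z2 where z2: "of_int N * p2 a b c d D1 D2 = of_int z2" using N(3) by (auto elim: Ints_cases)
  obtain z3 where z3: "of_int N * p3 a b c d D1 D2 = of_int z3" using N(4) by (auto elim: Ints_cases)
  obtain z4 where z4: "of_int N * p4 a b c d D1 D2 = of_int z4" using N(5) by (auto elim: Ints_cases)
  have czh: "(of_int z :: complex) = of_int N * of_rat q" if "of_int N * q = of_int z" for q z
  proof -
    have "(of_int z :: complex) = of_rat (of_int z)" by simp
    also have "\<dots> = of_rat (of_int N * q)" by (simp only: that)
    finally show ?thesis by (simp add: of_rat_mult)
  qed
  have cz: "(of_int z1 :: complex) = of_int N * of_rat (p1 a)"
     "(of_int z2 :: complex) = of_int N * of_rat (p2 a b c d D1 D2)"
     "(of_int z3 :: complex) = of_int N * of_rat (p3 a b c d D1 D2)"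
     "(of_int z4 :: complex) = of_int N * of_rat (p4 a b c d D1 D2)"
    using czh[OF z1] czh[OF z2] czh[OF z3] czh[OF z4] by simp_all
  define Qz :: "int poly" where "Qz = [:z4, z3, z2, z1, N:]"
  have ipQz: "ip Qz x = of_int N * poly Qc x" for x
  proof -
    have "ip Qz x = of_int z4 + x * (of_int z3 + x * (of_int z2 + x * (of_int z1 + x * of_int N)))"
      by (simp add: Qz_def map_poly_pCons)
    thus ?thesis by (simp add: Qc_def cz algebra_simps)
  qed
  have Qznz: "Qz \<noteq> 0" using N(1) by (simp add: Qz_def)
  have degQz: "degree Qz \<le> 4" using N(1) by (simp add: Qz_def)
  have "ip Qz \<alpha> = 0" using ipQz[of \<alpha>] Qc_root[of \<alpha>] ab(1) by (simp add: S_def \<beta>1_def)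
  hence "mp dvd Qz" by (rule mp(3))
  hence "degree mp \<le> degree Qz" by (rule dvd_imp_degree_le[OF _ Qznz])
  hence degmp_le: "degree mp \<le> 4" using degQz by simp
  define fp where "fp = (map_poly of_int mp :: complex poly)"
  have mpnz: "mp \<noteq> 0" using lm1 by auto
  have fpnz: "fp \<noteq> 0" by (simp add: fp_def ip_eq0 mpnz)
  have degfp: "degree fp = degree mp" by (simp add: fp_def degree_map_poly)
  have "S \<subseteq> {x. poly fp x = 0}" using roots by (auto simp: S_def fp_def)
  hence "card S \<le> card {x. poly fp x = 0}" by (intro card_mono poly_roots_finite fpnz)
  also have "\<dots> \<le> degree fp" by (rule card_poly_roots_bound[OF fpnz])
  finally have "4 \<le> degree mp" using cardS degfp by simp
  hence degmp: "degree mp = 4" using degmp_le by simp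
  have cfp4: "coeff fp 4 = 1" using lm1 degmp by (simp add: fp_def coeff_map_poly)
  have fpQc: "fp = Qc"
  proof (rule poly_eqI_degree_lead_coeff[of fp 4 Qc S])
    show "coeff fp 4 = coeff Qc 4" using cfp4 by (simp add: Qc_def numeral_eq_Suc)
    show "4 \<le> card S" using cardS by simp
    show "degree fp \<le> 4" using degfp degmp by simp
    show "degree Qc \<le> 4" using degQc by simp
    fix z assume "z \<in> S" thus "poly fp z = poly Qc z" using roots Qc_root by (auto simp: S_def fp_def)
  qed
  have coef: "coeff Qc i = of_int (coeff mp i)" for i unfolding fpQc[symmetric] fp_def
    by (simp add: coeff_map_poly)
  have ofr: "q \<in> \<int>" if "(of_rat q :: complex) = of_int k" for q k
  proof -
    have "(of_rat q :: complex) = of_rat (of_int k)" using that by simp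
    hence "q = of_int k" by (simp only: of_rat_eq_iff)
    thus ?thesis by simp
  qed
  have pint: "p1 a \<in> \<int>" "p2 a b c d D1 D2 \<in> \<int>" "p3 a b c d D1 D2 \<in> \<int>" "p4 a b c d D1 D2 \<in> \<int>"
  proof -
    have "of_rat (p1 a) = (of_int (coeff mp 3) :: complex)" using coef[of 3] by (simp add: Qc_def numeral_eq_Suc)
    moreover have "of_rat (p2 a b c d D1 D2) = (of_int (coeff mp 2) :: complex)" using coef[of 2] by (simp add: Qc_def numeral_eq_Suc)
    moreover have "of_rat (p3 a b c d D1 D2) = (of_int (coeff mp 1) :: complex)" using coef[of 1] by (simp add: Qc_def)
    moreover have "of_rat (p4 a b c d D1 D2) = (of_int (coeff mp 0) :: complex)" using coef[of 0] by (simp add: Qc_def)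
    ultimately show "p1 a \<in> \<int>" "p2 a b c d D1 D2 \<in> \<int>" "p3 a b c d D1 D2 \<in> \<int>" "p4 a b c d D1 D2 \<in> \<int>"
      by (auto intro: ofr)
  qed
  have sint: "s1 a b c d D1 D2 \<in> \<int>" "s2 a b c d D1 D2 \<in> \<int>" "s3 a b c d D1 D2 \<in> \<int>"
    using pint by (simp_all add: s1_def s2_def s3_def)
  define t1 where "t1 = 16*b*b*D1"
  define t2 where "t2 = 16*c*c*D2"
  define t3 where "t3 = 16*d*d*D1*D2"
  have res: "t^3 - s1 a b c d D1 D2 * t^2 + s2 a b c d D1 D2 * t - s3 a b c d D1 D2 = (t - t1) * (t - t2) * (t - t3)" for t
    unfolding t1_def t2_def t3_def by (rule resolvent)
  have t2int: "t2 \<in> \<int>" by (rule cubic_int[OF sint]) (simp add: res)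
  have t3int: "t3 \<in> \<int>" by (rule cubic_int[OF sint]) (simp add: res)
  from t2int obtain k2 where k2: "t2 = of_int k2" by (auto elim: Ints_cases)
  from t3int obtain k3 where k3: "t3 = of_int k3" by (auto elim: Ints_cases)
  have "(4*c)^2 * of_int (n*l) = of_int k2" using k2 by (simp add: t2_def D2_def power2_eq_square algebra_simps)
  hence "4*c \<in> \<int>" by (rule sqf_rat[OF sq_nl])
  then obtain U where U: "4*c = of_int U" by (auto elim: Ints_cases)
  have "(4*d*of_int l)^2 * of_int (m*n) = of_int k3" using k3
    by (simp add: t3_def D1_def D2_def power2_eq_square algebra_simps)
  hence "4*d*of_int l \<in> \<int>" by (rule sqf_rat[OF sq_mn])
  then obtain W where W: "4*d*of_int l = of_int W" by (auto elim: Ints_cases)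
  have UW: "U \<noteq> 0 \<or> W \<noteq> 0"
  proof (rule ccontr)
    assume "\<not> (U \<noteq> 0 \<or> W \<noteq> 0)"
    hence "c = 0" "d * of_int l = 0" using U W by simp_all
    thus False using ab(2) l0 by simp
  qed
  define Kn where "Kn = l * U^2 - m * W^2"
  have Kne: "Kn \<noteq> 0" unfolding Kn_def by (rule UW_ne[OF UW])
  have U': "(of_int U :: complex) = 4 * of_rat c"
  proof -
    have "(of_int U :: complex) = of_rat (of_int U)" by simp
    also have "\<dots> = of_rat (4 * c)" by (simp add: U)
    finally show ?thesis by (simp add: of_rat_mult)
  qed
  have W': "(of_int W :: complex) = 4 * of_rat d * of_int l"
  proof -
    have "(of_int W :: complex) = of_rat (of_int W)" by simp
    also have "\<dots> = of_rat (4 * d * of_int l)" by (simp add: W)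
    finally show ?thesis by (simp add: of_rat_mult)
  qed
  have "(\<beta>1 - \<beta>2) * (\<beta>3 - \<beta>4) = 4 * (of_rat c)^2 * (B*B) - 4 * (of_rat d)^2 * ((A*A) * (B*B))"
    unfolding d12 d34 EE_def by (simp add: of_rat_mult of_rat_minus algebra_simps power2_eq_square)
  also have "\<dots> = of_int n * of_int Kn / 4"
    unfolding AA BB Kn_def by (simp add: U' W' algebra_simps power2_eq_square)
  finally have Peq: "(\<beta>1 - \<beta>2) * (\<beta>3 - \<beta>4) = of_int n * of_int Kn / 4" .
  have "cmod ((\<beta>1 - \<beta>2) * (\<beta>3 - \<beta>4)) = real_of_int n * \<bar>real_of_int Kn\<bar> / 4"
    unfolding Peq using mn l0 lm by (simp add: norm_mult norm_divide)
  moreover have "\<bar>real_of_int Kn\<bar> \<ge> 1" using Kne by linarith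
  ultimately have Pbound: "real_of_int n / 4 \<le> cmod (\<beta>1 - \<beta>2) * cmod (\<beta>3 - \<beta>4)"
    using mn l0 lm by (simp add: norm_mult)
  define gg where "gg z = max 1 (cmod z)" for z
  define R where "R = {z. poly Qc z = 0 \<and> 1 \<le> cmod z}"
  have RS: "R \<subseteq> S" using Qc_root by (auto simp: R_def)
  have finS: "finite S" by (simp add: S_def)
  have "(\<Prod>z\<in>S. gg z) = (\<Prod>z\<in>R. gg z)"
    by (rule prod.mono_neutral_right[OF finS RS]) (auto simp: R_def gg_def Qc_root)
  also have "\<dots> = (\<Prod>z\<in>R. cmod z)" by (rule prod.cong) (auto simp: R_def gg_def)
  also have "\<dots> \<le> (\<Prod>z\<in>R. cmod z ^ order z Qc)"
  proof (rule prod_mono)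
    fix z assume z: "z \<in> R"
    hence "order z Qc \<noteq> 0" using Qcnz by (simp add: R_def order_root)
    moreover have "1 \<le> cmod z" using z by (simp add: R_def)
    ultimately have "cmod z ^ 1 \<le> cmod z ^ order z Qc" by (intro power_increasing) auto
    thus "0 \<le> cmod z \<and> cmod z \<le> cmod z ^ order z Qc" by simp
  qed
  also have "\<dots> = mahler_measure Qc" by (simp add: mahler_measure_def lcQc R_def)
  also have "\<dots> = mahler_alg \<alpha>" by (simp add: mahler_alg_def mp_def[symmetric] fp_def[symmetric] fpQc)
  finally have Mb: "(\<Prod>z\<in>S. gg z) \<le> mahler_alg \<alpha>" .
  have "(\<Prod>z\<in>S. gg z) = gg \<beta>1 * gg \<beta>2 * (gg \<beta>3 * gg \<beta>4)" using dist by (simp add: S_def)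
  moreover have "cmod (\<beta>1 - \<beta>2) \<le> 2 * gg \<beta>1 * gg \<beta>2" "cmod (\<beta>3 - \<beta>4) \<le> 2 * gg \<beta>3 * gg \<beta>4"
    unfolding gg_def by (rule g_bound)+
  ultimately have "cmod (\<beta>1 - \<beta>2) * cmod (\<beta>3 - \<beta>4) \<le> 4 * (\<Prod>z\<in>S. gg z)"
    using mult_mono[of "cmod (\<beta>1 - \<beta>2)" "2 * gg \<beta>1 * gg \<beta>2" "cmod (\<beta>3 - \<beta>4)" "2 * gg \<beta>3 * gg \<beta>4"]
    by (simp add: gg_def algebra_simps)
  thus ?thesis using Pbound Mb by linarith
qed

end


context bq begin

lemma K_subfield: "is_subfield K" by (rule gen_field_subfield)

lemma AB_in_K: "A \<in> K" "B \<in> K" using gen_field_sup[of "{A, B}"] by auto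

lemma witness: "A + B \<in> ring_of_integers K \<and> gen_field {A + B} = K"
proof -
  note kp = subfield_props[OF K_subfield]
  have sK: "A + B \<in> K" by (rule kp(3)[OF AB_in_K])
  define D1 where "D1 = m * l"
  define D2 where "D2 = n * l"
  define p :: "int poly" where "p = [:(D1 - D2)^2, 0, -2*(D1 + D2), 0, 1:]"
  have "lead_coeff p = 1" by (simp add: p_def)
  moreover have "ip p (A + B) = 0"
  proof -
    have "ip p (A + B) = (of_int D1 - of_int D2)^2 + (A + B) * ((A + B) * (-2 * (of_int D1 + of_int D2) + (A + B) * (A + B)))"
      by (simp add: p_def map_poly_pCons)
    also have "\<dots> = (A*A - B*B)^2 + (A + B) * ((A + B) * (-2 * (A*A + B*B) + (A + B) * (A + B)))"
      by (simp add: D1_def D2_def AA BB)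
    also have "\<dots> = 0" by algebra
    finally show ?thesis .
  qed
  ultimately have ai: "algebraic_int (A + B)" unfolding algebraic_int_altdef_ipoly by blast
  have "gen_field {A + B} \<subseteq> K" by (rule gen_field_least[OF K_subfield]) (use sK in auto)
  moreover have "K \<subseteq> gen_field {A + B}"
  proof (rule gen_field_least[OF gen_field_subfield])
    define F where "F = gen_field {A + B}"
    note fp = subfield_props[OF gen_field_subfield[of "{A + B}"], folded F_def]
    have two: "(2::complex) \<in> F"
      using subfield_of_int[OF gen_field_subfield[of "{A + B}"], of 2] by (simp add: F_def)
    have sF: "A + B \<in> F" using gen_field_sup[of "{A + B}"] by (simp add: F_def)
    have "A * B = ((A + B) * (A + B) - of_int (m*l) - of_int (n*l)) / 2"
      unfolding AA[symmetric] BB[symmetric] by (simp add: field_simps)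
    moreover have "((A + B) * (A + B) - of_int (m*l) - of_int (n*l)) / 2 \<in> F"
      by (intro fp(7,8,4) sF two subfield_of_int[OF gen_field_subfield[of "{A + B}"], folded F_def])
    ultimately have abF: "A * B \<in> F" by (simp only:)
    have ne: "(of_int (n*l) - of_int (m*l) :: complex) \<noteq> 0" using l0 mn by simp
    have "A = ((A + B) * (A * B) - of_int (m*l) * (A + B)) / (of_int (n*l) - of_int (m*l))"
      using ne unfolding AA[symmetric] BB[symmetric] by (simp add: field_simps)
    moreover have "((A + B) * (A * B) - of_int (m*l) * (A + B)) / (of_int (n*l) - of_int (m*l)) \<in> F"
      by (intro fp(7,8,4) sF abF subfield_of_int[OF gen_field_subfield[of "{A + B}"], folded F_def])
    ultimately have aF: "A \<in> F" by (simp only:)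
    have "B = (A + B) - A" by simp
    hence bF: "B \<in> F" using fp(7)[OF sF aF] by simp
    show "{A, B} \<subseteq> gen_field {A + B}" using aF bF by (simp add: F_def)
  qed
  ultimately show ?thesis using sK ai by (auto simp: ring_of_integers_def)
qed

end

theorem proposition3p1:
  fixes l m n :: int
  assumes "0 < l" "l < m" "m < n"
    and "coprime l m" "coprime l n" "coprime m n"
    and "squarefree l" "squarefree m" "squarefree n"
  shows "real_of_int n / 48 \<le>
    mahler_ring_of_integers
      (gen_field {complex_of_real (sqrt (real_of_int (m * l))),
                  complex_of_real (sqrt (real_of_int (n * l)))})"
proof -
  interpret bq l m n using assms by unfold_locales auto
  have KA: "gen_field {complex_of_real (sqrt (real_of_int (m * l))),
                  complex_of_real (sqrt (real_of_int (n * l)))} = K"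
    by (simp add: A_def B_def)
  have n0: "real_of_int n > 0" using assms by simp
  show ?thesis unfolding KA mahler_ring_of_integers_def
  proof (rule cInf_greatest)
    show "{mahler_alg \<alpha> |\<alpha>. \<alpha> \<in> ring_of_integers K \<and> gen_field {\<alpha>} = K} \<noteq> {}"
      using witness by blast
  next
    fix x assume "x \<in> {mahler_alg \<alpha> |\<alpha>. \<alpha> \<in> ring_of_integers K \<and> gen_field {\<alpha>} = K}"
    then obtain \<alpha> where "x = mahler_alg \<alpha>" "\<alpha> \<in> ring_of_integers K" "gen_field {\<alpha>} = K" by blast
    hence "real_of_int n / 16 \<le> x" using main_bound by blast
    thus "real_of_int n / 48 \<le> x" using n0 by linarith
  qed
qed


end
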